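(* Let $G$ be a network and fix an oriented edge $e$ of $G$. Let $\mathsf{FUSF}_G^e$ denote the joint distribution of a sample $\mathfrak F$ of $\mathsf{FUSF}_G$ and of the update $U(\mathfrak F,e)$. Then for every event $\mathscr A\subseteq\{0,1\}^{E(G)}$, \[ \mathsf{FUSF}_G(\mathfrak F \in \mathscr A) \geq \frac{c(e)}{c(e^-)}\,\mathsf{FUSF}_G^e(U(\mathfrak F,e) \in \mathscr A).\]
   Context: A network is a locally finite connected (infinite) multigraph $G=(V,E)$ with conductances $c:E\to(0,\infty)$; $c(u)$ is the sum of conductances of edges emanating from $u$. For a finite network $H$, $\mathsf{UST}_H$ gives each spanning tree probability proportional to the product of its conductances. For an exhaustion $V_n$, $G_n$ is the induced subnetwork and $\mathsf{FUSF}_G$ the weak limit of $\mathsf{UST}_{G_n}$. For a spanning tree $t$ and non-loop oriented edge $e$, $D(t,e)$ is the first edge on the path from $e^-$ to $e^+$ in $t$; if $T_n\sim\mathsf{UST}_{G_n}$ then $(T_n,D(T_n,e))$ converges in distribution to a pair $(\mathfrak F,D(e))$ with $\mathfrak F\sim\mathsf{FUSF}_G$. The update $U(f,e)$ is: $f$ if $e$ is a self-loop or $e\in f$; otherwise $f\cup\{e\}\setminus D(e)$ with $D(e)$ sampled from its conditional law given $\mathfrak F=f$, independently of everything else. *)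

theory Defs
  imports "HOL-Probability.Probability"
begin

text \<open>A multigraph is given by a vertex set V, an edge set E and, for every edge,
  a reference orientation: src x and tgt x are its two endpoints (a self-loop has
  src x = tgt x).  Parallel edges are distinct elements of E with the same endpoints.\<close>

definition joins :: "('e \<Rightarrow> 'v) \<Rightarrow> ('e \<Rightarrow> 'v) \<Rightarrow> 'e \<Rightarrow> 'v \<Rightarrow> 'v \<Rightarrow> bool" where
  "joins src tgt x u w \<longleftrightarrow> (src x = u \<and> tgt x = w) \<or> (src x = w \<and> tgt x = u)"

definition is_path :: "('e \<Rightarrow> 'v) \<Rightarrow> ('e \<Rightarrow> 'v) \<Rightarrow> 'e set \<Rightarrow> 'v list \<Rightarrow> 'e list \<Rightarrow> bool" where
  "is_path src tgt F vs ys \<longleftrightarrow>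
     length vs = Suc (length ys) \<and> distinct vs \<and> set ys \<subseteq> F \<and>
     (\<forall>i < length ys. joins src tgt (ys ! i) (vs ! i) (vs ! Suc i))"

definition connected_by :: "('e \<Rightarrow> 'v) \<Rightarrow> ('e \<Rightarrow> 'v) \<Rightarrow> 'e set \<Rightarrow> 'v \<Rightarrow> 'v \<Rightarrow> bool" where
  "connected_by src tgt F u w \<longleftrightarrow>
     (\<exists>vs ys. is_path src tgt F vs ys \<and> List.hd vs = u \<and> last vs = w)"

definition forest :: "('e \<Rightarrow> 'v) \<Rightarrow> ('e \<Rightarrow> 'v) \<Rightarrow> 'e set \<Rightarrow> bool" where
  "forest src tgt F \<longleftrightarrow>
     (\<forall>x\<in>F. src x \<noteq> tgt x \<and> \<not> connected_by src tgt (F - {x}) (src x) (tgt x))"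

definition induced_edges :: "'e set \<Rightarrow> ('e \<Rightarrow> 'v) \<Rightarrow> ('e \<Rightarrow> 'v) \<Rightarrow> 'v set \<Rightarrow> 'e set" where
  "induced_edges E src tgt W = {x\<in>E. src x \<in> W \<and> tgt x \<in> W}"

definition spanning_tree ::
  "'e set \<Rightarrow> ('e \<Rightarrow> 'v) \<Rightarrow> ('e \<Rightarrow> 'v) \<Rightarrow> 'v set \<Rightarrow> 'e set \<Rightarrow> bool" where
  "spanning_tree E src tgt W T \<longleftrightarrow>
     T \<subseteq> induced_edges E src tgt W \<and> forest src tgt T \<and>
     (\<forall>u\<in>W. \<forall>w\<in>W. connected_by src tgt T u w)"

definition network ::
  "'v set \<Rightarrow> 'e set \<Rightarrow> ('e \<Rightarrow> 'v) \<Rightarrow> ('e \<Rightarrow> 'v) \<Rightarrow> ('e \<Rightarrow> real) \<Rightarrow> bool" where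
  "network V E src tgt c \<longleftrightarrow>
     (\<forall>x\<in>E. src x \<in> V \<and> tgt x \<in> V) \<and>
     (\<forall>x\<in>E. c x > 0) \<and>
     (\<forall>v\<in>V. finite {x\<in>E. src x = v \<or> tgt x = v}) \<and>
     (\<forall>u\<in>V. \<forall>w\<in>V. connected_by src tgt E u w) \<and>
     infinite V"

text \<open>c(u): sum of conductances of the edges at u (a self-loop counted once).\<close>
definition vcond :: "'e set \<Rightarrow> ('e \<Rightarrow> 'v) \<Rightarrow> ('e \<Rightarrow> 'v) \<Rightarrow> ('e \<Rightarrow> real) \<Rightarrow> 'v \<Rightarrow> real" where
  "vcond E src tgt c u = (\<Sum>x\<in>{x\<in>E. src x = u \<or> tgt x = u}. c x)"

definition ust_prob ::
  "'e set \<Rightarrow> ('e \<Rightarrow> 'v) \<Rightarrow> ('e \<Rightarrow> 'v) \<Rightarrow> ('e \<Rightarrow> real) \<Rightarrow> 'v set \<Rightarrow> ('e set \<Rightarrow> bool) \<Rightarrow> real" where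
  "ust_prob E src tgt c W P =
     (\<Sum>T\<in>{T. spanning_tree E src tgt W T \<and> P T}. \<Prod>x\<in>T. c x) /
     (\<Sum>T\<in>{T. spanning_tree E src tgt W T}. \<Prod>x\<in>T. c x)"

definition first_edge :: "('e \<Rightarrow> 'v) \<Rightarrow> ('e \<Rightarrow> 'v) \<Rightarrow> 'e set \<Rightarrow> 'v \<Rightarrow> 'v \<Rightarrow> 'e" where
  "first_edge src tgt t a b =
     (THE y. \<exists>vs ys. is_path src tgt t vs ys \<and> List.hd vs = a \<and> last vs = b \<and>
                    ys \<noteq> [] \<and> List.hd ys = y)"

text \<open>Subsets of E with the product sigma-algebra (generated by the coordinate events).\<close>
definition conf_space :: "'e set \<Rightarrow> 'e set measure" where
  "conf_space E = sigma (Pow E) ((\<lambda>x. {f\<in>Pow E. x \<in> f}) ` E)"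

definition cyl :: "'e set \<Rightarrow> 'e set \<Rightarrow> 'e set \<Rightarrow> 'e set set" where
  "cyl E K B = {f\<in>Pow E. f \<inter> K = B}"

text \<open>Weak convergence on {0,1}^E (compact, product topology) is convergence of the
  probabilities of all cylinder events.\<close>
definition is_FUSF ::
  "'v set \<Rightarrow> 'e set \<Rightarrow> ('e \<Rightarrow> 'v) \<Rightarrow> ('e \<Rightarrow> 'v) \<Rightarrow> ('e \<Rightarrow> real) \<Rightarrow> (nat \<Rightarrow> 'v set)
     \<Rightarrow> 'e set measure \<Rightarrow> bool" where
  "is_FUSF V E src tgt c Vn \<mu> \<longleftrightarrow>
     prob_space \<mu> \<and> sets \<mu> = sets (conf_space E) \<and>
     (\<forall>K B. finite K \<longrightarrow> K \<subseteq> E \<longrightarrow> B \<subseteq> K \<longrightarrow>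
        (\<lambda>n. ust_prob E src tgt c (Vn n) (\<lambda>t. t \<inter> K = B)) \<longlonglongrightarrow> measure \<mu> (cyl E K B))"

text \<open>Joint limit law of (T_n, D(T_n,e)) on {0,1}^E x E (E discrete), for e = edge x
  oriented from a to b.\<close>
definition is_joint_FUSF_D ::
  "'v set \<Rightarrow> 'e set \<Rightarrow> ('e \<Rightarrow> 'v) \<Rightarrow> ('e \<Rightarrow> 'v) \<Rightarrow> ('e \<Rightarrow> real) \<Rightarrow> (nat \<Rightarrow> 'v set)
     \<Rightarrow> 'v \<Rightarrow> 'v \<Rightarrow> ('e set \<times> 'e) measure \<Rightarrow> bool" where
  "is_joint_FUSF_D V E src tgt c Vn a b \<nu> \<longleftrightarrow>
     prob_space \<nu> \<and> sets \<nu> = sets (conf_space E \<Otimes>\<^sub>M count_space E) \<and>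
     (\<forall>K B y. finite K \<longrightarrow> K \<subseteq> E \<longrightarrow> B \<subseteq> K \<longrightarrow> y \<in> E \<longrightarrow>
        (\<lambda>n. ust_prob E src tgt c (Vn n) (\<lambda>t. t \<inter> K = B \<and> first_edge src tgt t a b = y))
          \<longlonglongrightarrow> measure \<nu> (cyl E K B \<times> {y}))"

definition exhaustion ::
  "'v set \<Rightarrow> 'e set \<Rightarrow> ('e \<Rightarrow> 'v) \<Rightarrow> ('e \<Rightarrow> 'v) \<Rightarrow> (nat \<Rightarrow> 'v set) \<Rightarrow> bool" where
  "exhaustion V E src tgt Vn \<longleftrightarrow>
     (\<forall>n. finite (Vn n) \<and> Vn n \<subseteq> V \<and> Vn n \<subseteq> Vn (Suc n)) \<and> (\<Union>n. Vn n) = V \<and>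
     (\<forall>n. \<forall>u\<in>Vn n. \<forall>w\<in>Vn n. connected_by src tgt (induced_edges E src tgt (Vn n)) u w)"

text \<open>Update U(f,e) given the sampled value y of D(e); x is the underlying edge of e.\<close>
definition upd :: "('e \<Rightarrow> 'v) \<Rightarrow> ('e \<Rightarrow> 'v) \<Rightarrow> 'e \<Rightarrow> 'e set \<Rightarrow> 'e \<Rightarrow> 'e set" where
  "upd src tgt x f y = (if src x = tgt x \<or> x \<in> f then f else insert x f - {y})"

end

theory Submission
  imports Defs
begin


inductive_set mclass :: "'a set \<Rightarrow> 'a set set \<Rightarrow> 'a set set" for \<Omega> R where
  base: "A \<in> R \<Longrightarrow> A \<in> mclass \<Omega> R"
| inc: "(\<And>i::nat. A i \<in> mclass \<Omega> R) \<Longrightarrow> incseq A \<Longrightarrow> (\<Union>i. A i) \<in> mclass \<Omega> R"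
| dec: "(\<And>i::nat. A i \<in> mclass \<Omega> R) \<Longrightarrow> decseq A \<Longrightarrow> (\<Inter>i. A i) \<in> mclass \<Omega> R"

lemma mclass_sub:
  assumes "R \<subseteq> Pow \<Omega>" "A \<in> mclass \<Omega> R" shows "A \<in> sigma_sets \<Omega> R"
  using assms(2)
proof induction
  case (base A) then show ?case by (rule sigma_sets.Basic)
next
  case (inc A) then show ?case by (intro sigma_sets.Union) auto
next
  case (dec A) then show ?case using sigma_sets_Inter[OF assms(1)] by auto
qed

lemma mclass_compl:
  assumes R: "\<And>A. A \<in> R \<Longrightarrow> \<Omega> - A \<in> R" and "A \<in> mclass \<Omega> R"
  shows "\<Omega> - A \<in> mclass \<Omega> R"
  using assms(2)
proof induction
  case (base A) then show ?case using R by (intro mclass.base) auto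
next
  case (inc A)
  have e: "\<Omega> - (\<Union>i. A i) = (\<Inter>i. \<Omega> - A i)" by auto
  have "(\<Inter>i. \<Omega> - A i) \<in> mclass \<Omega> R"
    by (rule mclass.dec) (use inc in \<open>auto simp: incseq_def decseq_def\<close>)
  then show ?case unfolding e .
next
  case (dec A)
  have e: "\<Omega> - (\<Inter>i. A i) = (\<Union>i. \<Omega> - A i)" by auto
  have "(\<Union>i. \<Omega> - A i) \<in> mclass \<Omega> R"
    by (rule mclass.inc) (use dec in \<open>auto simp: incseq_def decseq_def\<close>)
  then show ?case unfolding e .
qed

lemma mclass_Int1:
  assumes R: "\<And>A B. A \<in> R \<Longrightarrow> B \<in> R \<Longrightarrow> A \<inter> B \<in> R" and "A \<in> mclass \<Omega> R" "B \<in> R"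
  shows "A \<inter> B \<in> mclass \<Omega> R"
  using assms(2)
proof induction
  case (base A) then show ?case using R assms(3) by (intro mclass.base) auto
next
  case (inc A)
  have e: "(\<Union>i. A i) \<inter> B = (\<Union>i. A i \<inter> B)" by auto
  have "(\<Union>i. A i \<inter> B) \<in> mclass \<Omega> R"
    by (rule mclass.inc) (use inc in \<open>auto simp: incseq_def decseq_def\<close>)
  then show ?case unfolding e .
next
  case (dec A)
  have e: "(\<Inter>i. A i) \<inter> B = (\<Inter>i. A i \<inter> B)" by auto
  have "(\<Inter>i. A i \<inter> B) \<in> mclass \<Omega> R"
    by (rule mclass.dec) (use dec in \<open>auto simp: incseq_def decseq_def\<close>)
  then show ?case unfolding e .
qed

lemma mclass_Int:
  assumes R: "\<And>A B. A \<in> R \<Longrightarrow> B \<in> R \<Longrightarrow> A \<inter> B \<in> R" and "C \<in> mclass \<Omega> R" "A \<in> mclass \<Omega> R"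
  shows "A \<inter> C \<in> mclass \<Omega> R"
  using assms(2)
proof induction
  case (base B) then show ?case using mclass_Int1[OF R assms(3)] by blast
next
  case (inc C)
  have e: "A \<inter> (\<Union>i. C i) = (\<Union>i. A \<inter> C i)" by auto
  have "(\<Union>i. A \<inter> C i) \<in> mclass \<Omega> R"
    by (rule mclass.inc) (use inc in \<open>auto simp: incseq_def decseq_def\<close>)
  then show ?case unfolding e .
next
  case (dec C)
  have e: "A \<inter> (\<Inter>i. C i) = (\<Inter>i. A \<inter> C i)" by auto
  have "(\<Inter>i. A \<inter> C i) \<in> mclass \<Omega> R"
    by (rule mclass.dec) (use dec in \<open>auto simp: incseq_def decseq_def\<close>)
  then show ?case unfolding e .
qed

lemma monotone_class:
  assumes RP: "R \<subseteq> Pow \<Omega>" and RO: "\<Omega> \<in> R" and Rc: "\<And>A. A \<in> R \<Longrightarrow> \<Omega> - A \<in> R"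
    and Ri: "\<And>A B. A \<in> R \<Longrightarrow> B \<in> R \<Longrightarrow> A \<inter> B \<in> R"
    and PR: "\<And>A. A \<in> R \<Longrightarrow> P A"
    and Pinc: "\<And>A. (\<And>i::nat. A i \<in> sigma_sets \<Omega> R) \<Longrightarrow> (\<And>i. P (A i)) \<Longrightarrow> incseq A \<Longrightarrow> P (\<Union>i. A i)"
    and Pdec: "\<And>A. (\<And>i::nat. A i \<in> sigma_sets \<Omega> R) \<Longrightarrow> (\<And>i. P (A i)) \<Longrightarrow> decseq A \<Longrightarrow> P (\<Inter>i. A i)"
    and A: "A \<in> sigma_sets \<Omega> R"
  shows "P A"
proof -
  let ?M = "mclass \<Omega> R"
  have MP: "P X" if "X \<in> ?M" for X
    using that
  proof induction
    case (base A) then show ?case by (rule PR)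
  next
    case (inc A) then show ?case using mclass_sub[OF RP] by (intro Pinc) auto
  next
    case (dec A) then show ?case using mclass_sub[OF RP] by (intro Pdec) auto
  qed
  have Msub: "?M \<subseteq> Pow \<Omega>" using mclass_sub[OF RP] sigma_sets_into_sp[OF RP] by blast
  have Un: "X \<union> Y \<in> ?M" if "X \<in> ?M" "Y \<in> ?M" for X Y
  proof -
    have "\<Omega> - ((\<Omega> - X) \<inter> (\<Omega> - Y)) \<in> ?M"
      using mclass_compl[OF Rc] mclass_Int[OF Ri] that by blast
    moreover have "\<Omega> - ((\<Omega> - X) \<inter> (\<Omega> - Y)) = X \<union> Y" using that Msub by auto
    ultimately show ?thesis by simp
  qed
  have "sigma_algebra \<Omega> ?M"
    unfolding sigma_algebra_iff2
  proof (intro conjI allI ballI impI)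
    show "?M \<subseteq> Pow \<Omega>" by (rule Msub)
    have "\<Omega> - \<Omega> \<in> ?M" using Rc[OF RO] by (rule mclass.base)
    then show "{} \<in> ?M" by simp
    show "\<Omega> - s \<in> ?M" if "s \<in> ?M" for s using mclass_compl[OF Rc that] .
    fix B :: "nat \<Rightarrow> _" assume B: "range B \<subseteq> ?M"
    have part: "(\<Union>i\<le>n. B i) \<in> ?M" for n
    proof (induction n)
      case 0 then show ?case using B by auto
    next
      case (Suc n)
      have "(\<Union>i\<le>Suc n. B i) = (\<Union>i\<le>n. B i) \<union> B (Suc n)" by (auto simp: atMost_Suc)
      moreover have "B (Suc n) \<in> ?M" using B by auto
      ultimately show ?case using Un[OF Suc] by simp
    qed
    have "(\<Union>i. B i) = (\<Union>n. \<Union>i\<le>n. B i)" by auto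
    moreover have "incseq (\<lambda>n. \<Union>i\<le>n. B i)" unfolding incseq_def by (intro allI impI UN_mono) auto
    ultimately show "(\<Union>i. B i) \<in> ?M" using part by (simp add: mclass.inc)
  qed
  then have "sigma_sets \<Omega> R \<subseteq> ?M"
    by (rule sigma_algebra.sigma_sets_subset) (auto intro: mclass.base)
  then show ?thesis using A MP by blast
qed


definition adjE :: "('e \<Rightarrow> 'v) \<Rightarrow> ('e \<Rightarrow> 'v) \<Rightarrow> 'e set \<Rightarrow> 'v \<Rightarrow> 'v \<Rightarrow> bool" where
  "adjE src tgt F u w \<longleftrightarrow> (\<exists>y\<in>F. joins src tgt y u w)"

abbreviation reach where "reach src tgt F \<equiv> (adjE src tgt F)\<^sup>*\<^sup>*"

lemma joins_sym: "joins src tgt y u w \<longleftrightarrow> joins src tgt y w u"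
  unfolding joins_def by auto

lemma adjE_sym: "adjE src tgt F u w \<Longrightarrow> adjE src tgt F w u"
  unfolding adjE_def using joins_sym by metis

lemma reach_sym: "reach src tgt F u w \<Longrightarrow> reach src tgt F w u"
proof (induction rule: rtranclp_induct)
  case base then show ?case by simp
next
  case (step v w)
  then show ?case using adjE_sym
    by (metis converse_rtranclp_into_rtranclp)
qed

lemma reach_trans: "reach src tgt F u v \<Longrightarrow> reach src tgt F v w \<Longrightarrow> reach src tgt F u w"
  by (rule rtranclp_trans)

lemma adjE_mono: "F \<subseteq> H \<Longrightarrow> adjE src tgt F u w \<Longrightarrow> adjE src tgt H u w"
  unfolding adjE_def by auto

lemma reach_mono: "reach src tgt F u w \<Longrightarrow> F \<subseteq> H \<Longrightarrow> reach src tgt H u w"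
  by (induction rule: rtranclp_induct) (auto intro: rtranclp.rtrancl_into_rtrancl adjE_mono)

lemma reach_edge: "y \<in> F \<Longrightarrow> reach src tgt F (src y) (tgt y)"
  unfolding adjE_def joins_def by (auto intro!: r_into_rtranclp)

lemma reach_joins: "y \<in> F \<Longrightarrow> joins src tgt y u w \<Longrightarrow> reach src tgt F u w"
  unfolding adjE_def by (auto intro!: r_into_rtranclp)

lemma path_reach:
  assumes "is_path src tgt F vs ys" "i \<le> j" "j < length vs"
    "\<And>k. i \<le> k \<Longrightarrow> k < j \<Longrightarrow> ys ! k \<in> H"
  shows "reach src tgt H (vs ! i) (vs ! j)"
  using assms(2-4)
proof (induction j)
  case 0 then show ?case by simp
next
  case (Suc j)
  show ?case
  proof (cases "i = Suc j")
    case True then show ?thesis by simp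
  next
    case False
    then have ij: "i \<le> j" using Suc by simp
    have "reach src tgt H (vs ! i) (vs ! j)" using Suc ij by simp
    moreover have "j < length ys" using Suc assms(1) unfolding is_path_def by simp
    then have "joins src tgt (ys ! j) (vs ! j) (vs ! Suc j)" using assms(1) unfolding is_path_def by blast
    then have "adjE src tgt H (vs ! j) (vs ! Suc j)" using Suc ij unfolding adjE_def by auto
    ultimately show ?thesis by (rule rtranclp.rtrancl_into_rtrancl)
  qed
qed

lemma connected_by_reach:
  assumes "connected_by src tgt F u w" shows "reach src tgt F u w"
proof -
  obtain vs ys where p: "is_path src tgt F vs ys" "hd vs = u" "last vs = w"
    using assms unfolding connected_by_def by blast
  have l: "length vs = Suc (length ys)" using p unfolding is_path_def by simp
  have "reach src tgt F (vs ! 0) (vs ! length ys)"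
    by (rule path_reach[OF p(1)]) (use p l in \<open>auto simp: is_path_def\<close>)
  moreover have "vs ! 0 = u" using p l by (cases vs) auto
  moreover have "vs ! length ys = w" using p l by (metis diff_Suc_1 last_conv_nth list.size(3) nat.distinct(1))
  ultimately show ?thesis by simp
qed

lemma reach_connected_by:
  assumes "reach src tgt F u w" shows "connected_by src tgt F u w"
  using assms
proof (induction rule: rtranclp_induct)
  case base
  have "is_path src tgt F [u] []" unfolding is_path_def by simp
  then show ?case unfolding connected_by_def by force
next
  case (step v w)
  obtain vs ys where p: "is_path src tgt F vs ys" "hd vs = u" "last vs = v"
    using step unfolding connected_by_def by blast
  obtain y where y: "y \<in> F" "joins src tgt y v w" using step unfolding adjE_def by blast
  have l: "length vs = Suc (length ys)" and d: "distinct vs" and s: "set ys \<subseteq> F"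
    and j: "\<forall>i<length ys. joins src tgt (ys ! i) (vs ! i) (vs ! Suc i)"
    using p unfolding is_path_def by auto
  show ?case
  proof (cases "w \<in> set vs")
    case True
    then obtain i where i: "i < length vs" "vs ! i = w" by (auto simp: in_set_conv_nth)
    have "is_path src tgt F (take (Suc i) vs) (take i ys)"
      unfolding is_path_def using l d s j i
      by (auto simp: min_def dest: in_set_takeD)
    moreover have "hd (take (Suc i) vs) = u" using p l by (cases vs) auto
    moreover have "last (take (Suc i) vs) = w" using i by (subst last_conv_nth) (auto simp: min_def intro!: arg_cong[where f="(!) vs"])
    ultimately show ?thesis unfolding connected_by_def by blast
  next
    case False
    have "is_path src tgt F (vs @ [w]) (ys @ [y])"
      unfolding is_path_def
    proof (intro conjI allI impI)
      show "length (vs @ [w]) = Suc (length (ys @ [y]))" using l by simp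
      show "distinct (vs @ [w])" using d False by simp
      show "set (ys @ [y]) \<subseteq> F" using s y by simp
      fix i assume "i < length (ys @ [y])"
      then consider "i < length ys" | "i = length ys" by fastforce
      then show "joins src tgt ((ys @ [y]) ! i) ((vs @ [w]) ! i) ((vs @ [w]) ! Suc i)"
      proof cases
        case 1 then show ?thesis using j l by (simp add: nth_append)
      next
        case 2
        have "vs ! length ys = v" using p l by (metis diff_Suc_1 last_conv_nth list.size(3) nat.distinct(1))
        then show ?thesis using 2 l y by (simp add: nth_append)
      qed
    qed
    moreover have "hd (vs @ [w]) = u" using p l by (cases vs) auto
    ultimately show ?thesis unfolding connected_by_def by force
  qed
qed

lemma connected_by_iff: "connected_by src tgt F u w \<longleftrightarrow> reach src tgt F u w"
  using connected_by_reach reach_connected_by by metis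

lemma reach_insert:
  assumes "reach src tgt (insert e H) u w"
  shows "reach src tgt H u w \<or> (reach src tgt H u (src e) \<and> reach src tgt H (tgt e) w)
     \<or> (reach src tgt H u (tgt e) \<and> reach src tgt H (src e) w)"
  using assms
proof (induction rule: rtranclp_induct)
  case base then show ?case by simp
next
  case (step v w)
  from step(2) obtain y where y: "y \<in> insert e H" "joins src tgt y v w" unfolding adjE_def by blast
  show ?case
  proof (cases "y \<in> H")
    case True
    then have "adjE src tgt H v w" using y unfolding adjE_def by blast
    then show ?thesis using step(3) by (meson rtranclp.rtrancl_into_rtrancl)
  next
    case False
    then have "y = e" using y by simp
    then have "(v = src e \<and> w = tgt e) \<or> (v = tgt e \<and> w = src e)" using y unfolding joins_def by auto
    moreover have "reach src tgt H v v" by simp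
    ultimately show ?thesis using step(3) by (elim disjE conjE) (auto intro: reach_trans)
  qed
qed

lemma reach_insert_redundant:
  assumes "reach src tgt H (src e) (tgt e)" "reach src tgt (insert e H) u w"
  shows "reach src tgt H u w"
  using reach_insert[OF assms(2)] assms(1) reach_sym reach_trans by metis


lemma joins_ends: "joins src tgt y u w \<Longrightarrow> {src y, tgt y} = {u, w}"
  unfolding joins_def by auto

lemma path_edge_at_start:
  assumes "is_path src tgt F vs ys" "i < length ys" "joins src tgt (ys ! i) (vs ! 0) w"
  shows "i = 0"
proof -
  have l: "length vs = Suc (length ys)" and d: "distinct vs"
    and j: "joins src tgt (ys ! i) (vs ! i) (vs ! Suc i)"
    using assms unfolding is_path_def by auto
  have "{vs ! i, vs ! Suc i} = {vs ! 0, w}" using joins_ends[OF j] joins_ends[OF assms(3)] by simp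
  then have "vs ! 0 = vs ! i \<or> vs ! 0 = vs ! Suc i" by auto
  moreover have "vs ! 0 = vs ! i \<longleftrightarrow> 0 = i" using d l assms(2) by (simp add: nth_eq_iff_index_eq)
  moreover have "vs ! 0 = vs ! Suc i \<longleftrightarrow> 0 = Suc i" using d l assms(2) by (simp add: nth_eq_iff_index_eq)
  ultimately show ?thesis by auto
qed

lemma path_edges_distinct:
  assumes "is_path src tgt F vs ys" "i < length ys" "k < length ys" "ys ! i = ys ! k"
  shows "i = k"
proof -
  have l: "length vs = Suc (length ys)" and d: "distinct vs"
    and j: "\<forall>i<length ys. joins src tgt (ys ! i) (vs ! i) (vs ! Suc i)"
    using assms unfolding is_path_def by auto
  have "{src (ys ! i), tgt (ys ! i)} = {vs ! i, vs ! Suc i}" using joins_ends[OF j[rule_format, OF assms(2)]] .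
  moreover have "{src (ys ! k), tgt (ys ! k)} = {vs ! k, vs ! Suc k}" using joins_ends[OF j[rule_format, OF assms(3)]] .
  ultimately have "{vs ! i, vs ! Suc i} = {vs ! k, vs ! Suc k}" using assms(4) by simp
  then have "(vs ! i = vs ! k) \<or> (vs ! i = vs ! Suc k \<and> vs ! Suc i = vs ! k)"
    unfolding doubleton_eq_iff by blast
  moreover have "vs ! i = vs ! k \<longleftrightarrow> i = k" using d l assms(2,3) by (simp add: nth_eq_iff_index_eq)
  moreover have "vs ! i = vs ! Suc k \<longleftrightarrow> i = Suc k" using d l assms(2,3) by (simp add: nth_eq_iff_index_eq)
  moreover have "vs ! Suc i = vs ! k \<longleftrightarrow> Suc i = k" using d l assms(2,3) by (simp add: nth_eq_iff_index_eq)
  ultimately show ?thesis by linarith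
qed

lemma forest_reach: "forest src tgt F \<longleftrightarrow>
   (\<forall>y\<in>F. src y \<noteq> tgt y \<and> \<not> reach src tgt (F - {y}) (src y) (tgt y))"
  unfolding forest_def connected_by_iff by simp

lemma forest_no_reach_joins:
  assumes "forest src tgt F" "y \<in> F" "joins src tgt y u w"
  shows "\<not> reach src tgt (F - {y}) u w"
proof -
  have "\<not> reach src tgt (F - {y}) (src y) (tgt y)" using assms unfolding forest_reach by blast
  from assms(3) consider (c1) "src y = u \<and> tgt y = w" | (c2) "src y = w \<and> tgt y = u" unfolding joins_def by blast
  then show ?thesis
  proof cases
    case c1 then show ?thesis using \<open>\<not> reach src tgt (F - {y}) (src y) (tgt y)\<close> by simp
  next
    case c2
    show ?thesis
    proof
      assume "reach src tgt (F - {y}) u w"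
      then have "reach src tgt (F - {y}) w u" by (rule reach_sym)
      then show False using c2 \<open>\<not> reach src tgt (F - {y}) (src y) (tgt y)\<close> by simp
    qed
  qed
qed

lemma path_nonempty:
  assumes "is_path src tgt F vs ys" "hd vs = a" "last vs = b" "a \<noteq> b"
  shows "ys \<noteq> []"
proof
  assume "ys = []"
  then have "length vs = 1" using assms(1) unfolding is_path_def by simp
  then obtain v where "vs = [v]" by (metis One_nat_def length_0_conv length_Suc_conv)
  then show False using assms(2-4) by simp
qed

lemma path_hd0: "is_path src tgt F vs ys \<Longrightarrow> hd vs = vs ! 0"
  unfolding is_path_def by (cases vs) auto

lemma path_last: "is_path src tgt F vs ys \<Longrightarrow> last vs = vs ! length ys"
  unfolding is_path_def by (subst last_conv_nth) auto

lemma first_edge_unique: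
  assumes f: "forest src tgt F"
    and p1: "is_path src tgt F vs1 ys1" "hd vs1 = a" "last vs1 = b"
    and p2: "is_path src tgt F vs2 ys2" "hd vs2 = a" "last vs2 = b" and ab: "a \<noteq> b"
  shows "hd ys1 = hd ys2"
proof (rule ccontr)
  assume ne: "hd ys1 \<noteq> hd ys2"
  have n1: "ys1 \<noteq> []" and n2: "ys2 \<noteq> []" using path_nonempty[OF p1 ab] path_nonempty[OF p2 ab] by auto
  define y where "y = ys1 ! 0"
  have h1: "hd ys1 = y" using n1 y_def by (simp add: hd_conv_nth)
  have h2: "hd ys2 = ys2 ! 0" using n2 by (simp add: hd_conv_nth)
  have l1: "length vs1 = Suc (length ys1)" and l2: "length vs2 = Suc (length ys2)"
    using p1 p2 unfolding is_path_def by auto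
  have jy: "joins src tgt y (vs1 ! 0) (vs1 ! 1)" using p1 n1 unfolding is_path_def y_def by auto
  have yF: "y \<in> F" using p1 n1 unfolding is_path_def y_def by (auto simp: subset_iff)
  have a1: "vs1 ! 0 = a" "vs2 ! 0 = a" using path_hd0[OF p1(1)] path_hd0[OF p2(1)] p1(2) p2(2) by auto
  have "reach src tgt (F - {y}) (vs2 ! 0) (vs2 ! length ys2)"
  proof (rule path_reach[OF p2(1)])
    fix k assume k: "0 \<le> k" "k < length ys2"
    have "ys2 ! k \<noteq> y"
    proof
      assume eq: "ys2 ! k = y"
      then have "joins src tgt (ys2 ! k) (vs2 ! 0) (vs1 ! 1)" using jy a1 by simp
      then have "k = 0" using path_edge_at_start[OF p2(1) k(2)] by blast
      then show False using eq ne h1 h2 by simp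
    qed
    then show "ys2 ! k \<in> F - {y}" using p2 k unfolding is_path_def by (auto simp: subset_iff)
  qed (use l2 in auto)
  then have r1: "reach src tgt (F - {y}) a b" using a1 path_last[OF p2(1)] p2 by simp
  have "reach src tgt (F - {y}) (vs1 ! 1) (vs1 ! length ys1)"
  proof (rule path_reach[OF p1(1)])
    fix k assume k: "1 \<le> k" "k < length ys1"
    have "ys1 ! k \<noteq> y"
    proof
      assume eq: "ys1 ! k = y"
      then have "k = 0" using path_edges_distinct[OF p1(1) k(2), of 0] n1 y_def by auto
      then show False using k by simp
    qed
    then show "ys1 ! k \<in> F - {y}" using p1 k unfolding is_path_def by (auto simp: subset_iff)
  qed (use l1 n1 in \<open>auto simp: Suc_le_eq\<close>)
  then have r2: "reach src tgt (F - {y}) (vs1 ! 1) b" using path_last[OF p1(1)] p1 by simp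
  have "reach src tgt (F - {y}) (vs1 ! 0) (vs1 ! 1)" using reach_trans[OF r1 reach_sym[OF r2]] a1 by simp
  then show False using forest_no_reach_joins[OF f yF jy] by simp
qed

lemma first_edge_eq:
  assumes "forest src tgt F" "is_path src tgt F vs ys" "hd vs = a" "last vs = b" "a \<noteq> b"
  shows "first_edge src tgt F a b = hd ys"
  unfolding first_edge_def
proof (rule the_equality)
  show "\<exists>vs' ys'. is_path src tgt F vs' ys' \<and> hd vs' = a \<and> last vs' = b \<and> ys' \<noteq> [] \<and> hd ys' = hd ys"
    using assms(2-4) path_nonempty[OF assms(2-5)] by blast
next
  fix y assume "\<exists>vs' ys'. is_path src tgt F vs' ys' \<and> hd vs' = a \<and> last vs' = b \<and> ys' \<noteq> [] \<and> hd ys' = y"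
  then obtain vs' ys' where "is_path src tgt F vs' ys'" "hd vs' = a" "last vs' = b" "hd ys' = y" by blast
  then show "y = hd ys" using first_edge_unique[OF assms(1) _ _ _ assms(2-5)] by simp
qed


lemma spanning_reach:
  "spanning_tree E src tgt W t \<longleftrightarrow> t \<subseteq> induced_edges E src tgt W \<and> forest src tgt t \<and>
     (\<forall>u\<in>W. \<forall>w\<in>W. reach src tgt t u w)"
  unfolding spanning_tree_def connected_by_iff by simp

lemma tree_path:
  assumes "spanning_tree E src tgt W t" "a \<in> W" "b \<in> W" "a \<noteq> b"
  obtains vs ys where "is_path src tgt t vs ys" "vs ! 0 = a" "vs ! length ys = b" "ys \<noteq> []"
    "first_edge src tgt t a b = ys ! 0"
proof -
  have "connected_by src tgt t a b" using assms unfolding spanning_tree_def by blast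
  then obtain vs ys where p: "is_path src tgt t vs ys" "hd vs = a" "last vs = b"
    unfolding connected_by_def by blast
  have f: "forest src tgt t" using assms unfolding spanning_tree_def by blast
  have n: "ys \<noteq> []" using path_nonempty[OF p assms(4)] .
  have "first_edge src tgt t a b = hd ys" using first_edge_eq[OF f p assms(4)] .
  also have "\<dots> = ys ! 0" using n by (simp add: hd_conv_nth)
  finally show ?thesis using that p n path_hd0[OF p(1)] path_last[OF p(1)] by simp
qed

lemma first_edge_at:
  assumes "spanning_tree E src tgt W t" "a \<in> W" "b \<in> W" "a \<noteq> b"
  shows "first_edge src tgt t a b \<in> t" "src (first_edge src tgt t a b) = a \<or> tgt (first_edge src tgt t a b) = a"
proof -
  obtain vs ys where p: "is_path src tgt t vs ys" "vs ! 0 = a" "vs ! length ys = b" "ys \<noteq> []"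
    "first_edge src tgt t a b = ys ! 0" using tree_path[OF assms] by blast
  have "joins src tgt (ys ! 0) (vs ! 0) (vs ! 1)" using p unfolding is_path_def by auto
  then show "src (first_edge src tgt t a b) = a \<or> tgt (first_edge src tgt t a b) = a"
    using p unfolding joins_def by auto
  show "first_edge src tgt t a b \<in> t" using p unfolding is_path_def by (auto simp: subset_iff)
qed

lemma exchange:
  assumes st: "spanning_tree E src tgt W t" and xE: "x \<in> E"
    and ab: "(a = src x \<and> b = tgt x) \<or> (a = tgt x \<and> b = src x)"
    and loop: "src x \<noteq> tgt x" and aW: "a \<in> W" and bW: "b \<in> W" and xt: "x \<notin> t"
  shows "spanning_tree E src tgt W (insert x t - {first_edge src tgt t a b})"
proof -
  have anb: "a \<noteq> b" using ab loop by auto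
  obtain vs ys where p: "is_path src tgt t vs ys" "vs ! 0 = a" "vs ! length ys = b" "ys \<noteq> []"
    and fe: "first_edge src tgt t a b = ys ! 0" using tree_path[OF st aW bW anb] by blast
  define f where "f = ys ! 0"
  define v1 where "v1 = vs ! 1"
  define t' where "t' = insert x t - {f}"
  have l: "length vs = Suc (length ys)" using p unfolding is_path_def by simp
  have ft: "forest src tgt t" and tsub: "t \<subseteq> induced_edges E src tgt W"
    and tc: "\<forall>u\<in>W. \<forall>w\<in>W. reach src tgt t u w" using st unfolding spanning_reach by auto
  have jf: "joins src tgt f a v1" using p unfolding is_path_def f_def v1_def by auto
  have fin: "f \<in> t" using p unfolding is_path_def f_def by (auto simp: subset_iff)
  have fx: "f \<noteq> x" using fin xt by auto
  have ysin: "\<And>k. k < length ys \<Longrightarrow> ys ! k \<in> t" using p unfolding is_path_def by (auto simp: subset_iff)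
  have R1: "reach src tgt (t - {f}) v1 b"
  proof -
    have "reach src tgt (t - {f}) (vs ! 1) (vs ! length ys)"
    proof (rule path_reach[OF p(1)])
      fix k assume k: "1 \<le> k" "k < length ys"
      have "ys ! k \<noteq> f"
      proof
        assume "ys ! k = f"
        then have "k = 0" using path_edges_distinct[OF p(1) k(2), of 0] p(4) f_def by auto
        then show False using k by simp
      qed
      then show "ys ! k \<in> t - {f}" using ysin k by auto
    qed (use l p(4) in \<open>auto simp: Suc_le_eq\<close>)
    then show ?thesis using p(3) v1_def by simp
  qed
  have R2: "\<not> reach src tgt (t - {f}) a v1" using forest_no_reach_joins[OF ft fin jf] .
  have sub1: "t - {f} \<subseteq> t'" unfolding t'_def by auto
  have xt': "x \<in> t'" unfolding t'_def using fx by auto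
  have jx: "joins src tgt x a b" using ab unfolding joins_def by auto
  have "reach src tgt t' a v1"
  proof -
    have "reach src tgt t' a b" using reach_joins[OF xt' jx] .
    moreover have "reach src tgt t' b v1" using reach_sym[OF reach_mono[OF R1 sub1]] .
    ultimately show ?thesis by (rule reach_trans)
  qed
  then have rf: "reach src tgt t' (src f) (tgt f)"
    using jf reach_sym[OF \<open>reach src tgt t' a v1\<close>] unfolding joins_def by auto
  have conn: "\<forall>u\<in>W. \<forall>w\<in>W. reach src tgt t' u w"
  proof (intro ballI)
    fix u w assume "u \<in> W" "w \<in> W"
    then have "reach src tgt t u w" using tc by blast
    then have "reach src tgt (insert f t') u w" by (rule reach_mono) (auto simp: t'_def)
    then show "reach src tgt t' u w" using reach_insert_redundant[OF rf] by blast
  qed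
  have "x \<in> induced_edges E src tgt W" using xE ab aW bW unfolding induced_edges_def by auto
  then have ssub: "t' \<subseteq> induced_edges E src tgt W" using tsub unfolding t'_def by auto
  have forest': "forest src tgt t'"
    unfolding forest_reach
  proof (intro ballI conjI)
    fix z assume zt': "z \<in> t'"
    show "src z \<noteq> tgt z"
    proof (cases "z = x")
      case True then show ?thesis using loop by simp
    next
      case False
      then have "z \<in> t" using zt' unfolding t'_def by auto
      then show ?thesis using ft unfolding forest_reach by blast
    qed
    show "\<not> reach src tgt (t' - {z}) (src z) (tgt z)"
    proof (cases "z = x")
      case True
      have eq: "t' - {z} = t - {f}" using True xt unfolding t'_def by auto
      show ?thesis
      proof
        assume "reach src tgt (t' - {z}) (src z) (tgt z)"
        then have r: "reach src tgt (t - {f}) (src x) (tgt x)" using eq True by simp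
        have "reach src tgt (t - {f}) a b"
          using ab r reach_sym[OF r] by auto
        then have "reach src tgt (t - {f}) a v1" by (rule reach_trans[OF _ reach_sym[OF R1]])
        then show False using R2 by simp
      qed
    next
      case False
      then have zt: "z \<in> t" and zf: "z \<noteq> f" using zt' unfolding t'_def by auto
      define H where "H = t - {f} - {z}"
      have eqH: "t' - {z} = insert x H" unfolding H_def t'_def using False fx by auto
      have Ht: "H \<subseteq> t - {z}" unfolding H_def by auto
      have Hf: "H \<subseteq> t - {f}" unfolding H_def by auto
      have NR: "\<not> reach src tgt (t - {z}) (src z) (tgt z)" using ft zt unfolding forest_reach by blast
      have NRs: "\<not> reach src tgt (t - {z}) (tgt z) (src z)"
        using NR reach_sym[of src tgt "t - {z}" "tgt z" "src z"] by blast
      have K: "\<not> (reach src tgt H p a \<and> reach src tgt H b q)" if pq: "{p, q} = {src z, tgt z}" for p q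
      proof
        assume h: "reach src tgt H p a \<and> reach src tgt H b q"
        have NRpq: "\<not> reach src tgt (t - {z}) p q"
          using pq NR NRs unfolding doubleton_eq_iff by auto
        show False
        proof (cases "z \<in> set ys")
          case False
          have "reach src tgt (t - {z}) (vs ! 0) (vs ! length ys)"
          proof (rule path_reach[OF p(1)])
            fix k assume "0 \<le> k" "k < length ys"
            then show "ys ! k \<in> t - {z}" using ysin False by (auto simp: in_set_conv_nth)
          qed (use l in auto)
          then have rab: "reach src tgt (t - {z}) a b" using p by simp
          have "reach src tgt (t - {z}) p a" using reach_mono[OF conjunct1[OF h] Ht] .
          moreover have "reach src tgt (t - {z}) b q" using reach_mono[OF conjunct2[OF h] Ht] .
          ultimately have "reach src tgt (t - {z}) p q" using reach_trans[OF reach_trans[OF _ rab]] by blast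
          then show False using NRpq by simp
        next
          case True
          then obtain i where i: "i < length ys" "ys ! i = z" by (auto simp: in_set_conv_nth)
          have i0: "i \<noteq> 0" using i zf f_def by (cases i) auto
          have neq: "\<And>k. k < length ys \<Longrightarrow> k \<noteq> 0 \<Longrightarrow> k \<noteq> i \<Longrightarrow> ys ! k \<in> H"
          proof -
            fix k assume k: "k < length ys" "k \<noteq> 0" "k \<noteq> i"
            have "ys ! k \<noteq> f" using path_edges_distinct[OF p(1) k(1), of 0] k p(4) f_def by auto
            moreover have "ys ! k \<noteq> z" using path_edges_distinct[OF p(1) k(1) i(1)] k i by auto
            ultimately show "ys ! k \<in> H" using ysin[OF k(1)] unfolding H_def by auto
          qed
          have P1: "reach src tgt H v1 (vs ! i)" unfolding v1_def
            by (rule path_reach[OF p(1)]) (use i i0 l neq in auto)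
          have P2: "reach src tgt H (vs ! Suc i) b"
            unfolding p(3)[symmetric]
            by (rule path_reach[OF p(1)]) (use i i0 l neq in auto)
          have jz: "joins src tgt z (vs ! i) (vs ! Suc i)" using p(1) i unfolding is_path_def by auto
          have "{p, q} = {vs ! i, vs ! Suc i}" using pq joins_ends[OF jz] by simp
          then consider (o1) "p = vs ! i" "q = vs ! Suc i" | (o2) "p = vs ! Suc i" "q = vs ! i"
            unfolding doubleton_eq_iff by blast
          then show False
          proof cases
            case o1
            have "reach src tgt H a p" using h reach_sym[of src tgt H p a] by blast
            then have "reach src tgt H a v1" using reach_trans[OF _ reach_sym[OF P1]] o1 by simp
            then have "reach src tgt (t - {f}) a v1" by (rule reach_mono[OF _ Hf])
            then show False using R2 by simp
          next
            case o2
            have "reach src tgt H p q" using reach_trans[OF P2] h o2 by simp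
            then have "reach src tgt (t - {z}) p q" by (rule reach_mono[OF _ Ht])
            then show False using NRpq by simp
          qed
        qed
      qed
      show ?thesis
      proof
        assume "reach src tgt (t' - {z}) (src z) (tgt z)"
        then have "reach src tgt (insert x H) (src z) (tgt z)" using eqH by simp
        from reach_insert[OF this] consider
            (c0) "reach src tgt H (src z) (tgt z)"
          | (c1) "reach src tgt H (src z) (src x)" "reach src tgt H (tgt x) (tgt z)"
          | (c2) "reach src tgt H (src z) (tgt x)" "reach src tgt H (src x) (tgt z)" by blast
        then show False
        proof cases
          case c0
          then have "reach src tgt (t - {z}) (src z) (tgt z)" by (rule reach_mono[OF _ Ht])
          then show False using NR by simp
        next
          case c1
          show False
          proof (cases "a = src x")
            case True
            then have "b = tgt x" using ab loop by auto
            then show False using K[of "src z" "tgt z"] c1 True by simp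
          next
            case False
            then have "a = tgt x" "b = src x" using ab by auto
            moreover have "reach src tgt H (tgt z) (tgt x)" using reach_sym[OF c1(2)] .
            moreover have "reach src tgt H (src x) (src z)" using reach_sym[OF c1(1)] .
            ultimately show False using K[of "tgt z" "src z"] by (simp add: insert_commute)
          qed
        next
          case c2
          show False
          proof (cases "a = src x")
            case True
            then have "b = tgt x" using ab loop by auto
            moreover have "reach src tgt H (tgt z) (src x)" using reach_sym[OF c2(2)] .
            moreover have "reach src tgt H (tgt x) (src z)" using reach_sym[OF c2(1)] .
            ultimately show False using K[of "tgt z" "src z"] True by (simp add: insert_commute)
          next
            case False
            then have "a = tgt x" "b = src x" using ab by auto
            then show False using K[of "src z" "tgt z"] c2 by simp
          qed
        qed
      qed
    qed
  qed
  show ?thesis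
    unfolding spanning_reach using ssub forest' conn fe t'_def f_def by simp
qed


lemma finite_induced:
  assumes "network V E src tgt c" "finite W" "W \<subseteq> V"
  shows "finite (induced_edges E src tgt W)"
proof -
  have "induced_edges E src tgt W \<subseteq> (\<Union>v\<in>W. {y\<in>E. src y = v \<or> tgt y = v})"
    unfolding induced_edges_def by auto
  moreover have "finite (\<Union>v\<in>W. {y\<in>E. src y = v \<or> tgt y = v})"
    using assms unfolding network_def by (auto intro!: finite_UN_I)
  ultimately show ?thesis by (rule finite_subset)
qed

lemma finite_ST:
  assumes "network V E src tgt c" "finite W" "W \<subseteq> V"
  shows "finite {T. spanning_tree E src tgt W T \<and> Q T}"
proof -
  have "{T. spanning_tree E src tgt W T \<and> Q T} \<subseteq> Pow (induced_edges E src tgt W)"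
    unfolding spanning_tree_def by auto
  then show ?thesis using finite_induced[OF assms] by (meson finite_Pow_iff finite_subset)
qed

lemma tree_finite:
  assumes "network V E src tgt c" "finite W" "W \<subseteq> V" "spanning_tree E src tgt W T"
  shows "finite T"
  using finite_induced[OF assms(1-3)] assms(4) unfolding spanning_tree_def by (meson finite_subset)

lemma tree_E:
  assumes "spanning_tree E src tgt W T" shows "T \<subseteq> E"
  using assms unfolding spanning_tree_def induced_edges_def by auto

lemma finite_sum_ineq:
  assumes net: "network V E src tgt c" and W: "finite W" "W \<subseteq> V"
    and xE: "x \<in> E" and ab: "(a = src x \<and> b = tgt x) \<or> (a = tgt x \<and> b = src x)"
    and loop: "src x \<noteq> tgt x" and aW: "a \<in> W" and bW: "b \<in> W"
  shows "(\<Sum>T\<in>{T. spanning_tree E src tgt W T \<and> P (upd src tgt x T (first_edge src tgt T a b))}. \<Prod>y\<in>T. c y)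
     \<le> vcond E src tgt c a / c x * (\<Sum>T\<in>{T. spanning_tree E src tgt W T \<and> P T}. \<Prod>y\<in>T. c y)"
proof -
  define w where "w T = (\<Prod>y\<in>T. c y)" for T
  define fe where "fe T = first_edge src tgt T a b" for T
  define g where "g T = insert x T - {fe T}" for T
  define Ea where "Ea = {y\<in>E. src y = a \<or> tgt y = a}"
  define ST where "ST = {T. spanning_tree E src tgt W T}"
  define S where "S = {T. spanning_tree E src tgt W T \<and> P (upd src tgt x T (fe T))}"
  define S1 where "S1 = {T\<in>ST. x \<in> T \<and> P T}"
  define S2 where "S2 = {T\<in>ST. x \<notin> T \<and> P (g T)}"
  define A1 where "A1 = sum w S1"
  have cpos: "\<And>y. y \<in> E \<Longrightarrow> c y > 0" using net unfolding network_def by auto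
  have anb: "a \<noteq> b" using ab loop by auto
  have aV: "a \<in> V" using aW W by auto
  have finEa: "finite Ea" using net aV unfolding network_def Ea_def by auto
  have xEa: "x \<in> Ea" using xE ab unfolding Ea_def by auto
  have vc: "vcond E src tgt c a = sum c Ea" unfolding vcond_def Ea_def by simp
  have finST: "finite ST" using finite_ST[OF net W, of "\<lambda>_. True"] unfolding ST_def by simp
  have finS1: "finite S1" "finite S2" using finST unfolding S1_def S2_def by auto
  have wnn: "w T \<ge> 0" if "T \<in> ST" for T
  proof -
    have "T \<subseteq> E" using tree_E[of E src tgt W T] that unfolding ST_def by simp
    then show ?thesis unfolding w_def using cpos by (intro prod_nonneg) (auto intro: less_imp_le)
  qed
  have Seq: "S = S1 \<union> S2"
    unfolding S_def S1_def S2_def ST_def upd_def g_def using loop by auto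
  have disj: "S1 \<inter> S2 = {}" unfolding S1_def S2_def by auto
  have S2p: "fe T \<in> T \<and> fe T \<in> Ea - {x} \<and> g T \<in> S1 \<and> w T * c x = w (g T) * c (fe T)"
    if T: "T \<in> S2" for T
  proof -
    have st: "spanning_tree E src tgt W T" and xT: "x \<notin> T" and Pg: "P (g T)"
      using T unfolding S2_def ST_def by auto
    have feT: "fe T \<in> T" and fea: "src (fe T) = a \<or> tgt (fe T) = a"
      using first_edge_at[OF st aW bW anb] unfolding fe_def by auto
    have "fe T \<in> E" using tree_E[OF st] feT by auto
    then have "fe T \<in> Ea - {x}" using fea feT xT unfolding Ea_def by auto
    moreover have "g T \<in> ST" using exchange[OF st xE ab loop aW bW xT] unfolding g_def fe_def ST_def by simp
    moreover have "x \<in> g T" unfolding g_def using feT xT by auto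
    moreover have "w T * c x = w (g T) * c (fe T)"
    proof -
      have finT: "finite T" using tree_finite[OF net W st] .
      have "w T = c (fe T) * w (T - {fe T})" unfolding w_def using finT feT
        by (simp add: prod.remove)
      moreover have "g T = insert x (T - {fe T})" unfolding g_def using xT feT by auto
      then have "w (g T) = c x * w (T - {fe T})" unfolding w_def using finT xT by simp
      ultimately show ?thesis by simp
    qed
    ultimately show ?thesis using feT Pg unfolding S1_def by auto
  qed
  define h where "h T = (g T, fe T)" for T
  have inj: "inj_on h S2"
  proof (rule inj_onI)
    fix T1 T2 assume T1: "T1 \<in> S2" and T2: "T2 \<in> S2" and eq: "h T1 = h T2"
    have r: "T = insert (fe T) (g T) - {x}" if "T \<in> S2" for T
    proof -
      have "x \<notin> T" using that unfolding S2_def by auto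
      moreover have "fe T \<in> T" "fe T \<noteq> x" using S2p[OF that] by auto
      ultimately show ?thesis unfolding g_def by auto
    qed
    show "T1 = T2" using r[OF T1] r[OF T2] eq unfolding h_def by simp
  qed
  define Sig where "Sig = S1 \<times> (Ea - {x})"
  have hS: "h ` S2 \<subseteq> Sig" unfolding Sig_def h_def using S2p by auto
  have "sum w S2 = (\<Sum>T\<in>S2. w (g T) * c (fe T) / c x)"
  proof (rule sum.cong)
    fix T assume "T \<in> S2"
    then show "w T = w (g T) * c (fe T) / c x" using S2p cpos[OF xE]
      by (metis nonzero_mult_div_cancel_right order_less_irrefl)
  qed simp
  also have "\<dots> = (\<Sum>p\<in>h ` S2. w (fst p) * c (snd p) / c x)"
    using sum.reindex[OF inj, of "\<lambda>p. w (fst p) * c (snd p) / c x"] unfolding h_def by simp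
  also have "\<dots> \<le> (\<Sum>p\<in>Sig. w (fst p) * c (snd p) / c x)"
  proof (rule sum_mono2)
    show "finite Sig" unfolding Sig_def using finS1 finEa by simp
    show "h ` S2 \<subseteq> Sig" by (rule hS)
    fix p assume "p \<in> Sig - h ` S2"
    then have "fst p \<in> ST" "snd p \<in> E" unfolding Sig_def S1_def Ea_def by auto
    then show "0 \<le> w (fst p) * c (snd p) / c x"
      using wnn cpos xE by (simp add: less_imp_le)
  qed
  also have "\<dots> = (\<Sum>T\<in>S1. \<Sum>f\<in>Ea - {x}. w T * c f / c x)"
    unfolding Sig_def by (simp add: sum.cartesian_product case_prod_beta)
  also have "\<dots> = (\<Sum>T\<in>S1. w T * (\<Sum>f\<in>Ea - {x}. c f) / c x)"
    by (simp add: sum_distrib_left sum_divide_distrib)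
  also have "(\<Sum>f\<in>Ea - {x}. c f) = vcond E src tgt c a - c x"
    using vc finEa xEa by (simp add: sum_diff1)
  finally have S2b: "sum w S2 \<le> A1 * ((vcond E src tgt c a - c x) / c x)"
    unfolding A1_def by (simp add: sum_distrib_right sum_divide_distrib)
  have "sum w S = A1 + sum w S2"
    unfolding Seq A1_def using finS1 disj by (simp add: sum.union_disjoint)
  also have "\<dots> \<le> A1 + A1 * ((vcond E src tgt c a - c x) / c x)" using S2b by simp
  also have "\<dots> = vcond E src tgt c a / c x * A1"
    using cpos[OF xE] by (simp add: field_simps)
  also have "A1 \<le> (\<Sum>T\<in>{T. spanning_tree E src tgt W T \<and> P T}. w T)"
  proof -
    have "S1 \<subseteq> {T. spanning_tree E src tgt W T \<and> P T}" unfolding S1_def ST_def by auto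
    moreover have "finite {T. spanning_tree E src tgt W T \<and> P T}" using finite_ST[OF net W] .
    ultimately show ?thesis unfolding A1_def
      by (intro sum_mono2) (auto simp: ST_def intro: wnn)
  qed
  then have "vcond E src tgt c a / c x * A1 \<le> vcond E src tgt c a / c x * (\<Sum>T\<in>{T. spanning_tree E src tgt W T \<and> P T}. w T)"
  proof (rule mult_left_mono)
    have "vcond E src tgt c a \<ge> 0" unfolding vc using cpos unfolding Ea_def by (intro sum_nonneg) (auto intro: less_imp_le)
    then show "0 \<le> vcond E src tgt c a / c x" using cpos[OF xE] by simp
  qed
  finally show ?thesis unfolding S_def w_def fe_def .
qed


definition cylset :: "'e set \<Rightarrow> 'e set \<Rightarrow> 'e set set \<Rightarrow> 'e set set" where
  "cylset E K BB = {f\<in>Pow E. f \<inter> K \<in> BB}"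

definition coordset :: "'e set \<Rightarrow> 'e \<Rightarrow> 'e set set" where
  "coordset E z = {f\<in>Pow E. z \<in> f}"

lemma conf_gen_sub: "(\<lambda>x. {f\<in>Pow E. x \<in> f}) ` E \<subseteq> Pow (Pow E)" by auto

lemma conf_sets: "sets (conf_space E) = sigma_sets (Pow E) ((\<lambda>x. {f\<in>Pow E. x \<in> f}) ` E)"
  unfolding conf_space_def by (rule sets_measure_of[OF conf_gen_sub])

lemma conf_space_eq: "space (conf_space E) = Pow E"
  unfolding conf_space_def by (rule space_measure_of[OF conf_gen_sub])

lemma conf_top: "Pow E \<in> sets (conf_space E)"
  using sets.top[of "conf_space E"] unfolding conf_space_eq .

lemma coord_sets: "z \<in> E \<Longrightarrow> coordset E z \<in> sets (conf_space E)"
  unfolding conf_sets coordset_def by (rule sigma_sets.Basic) auto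

lemma cyl_sets:
  assumes "finite K" "K \<subseteq> E" shows "cyl E K B \<in> sets (conf_space E)"
proof (cases "B \<subseteq> K")
  case False
  then have "cyl E K B = {}" unfolding cyl_def by auto
  then show ?thesis by simp
next
  case True
  have eq: "cyl E K B = Pow E - (\<Union>z\<in>B. Pow E - coordset E z) - (\<Union>z\<in>K - B. coordset E z)"
    unfolding cyl_def coordset_def using True by auto
  have fB: "finite B" "finite (K - B)" using True assms finite_subset by auto
  have "Pow E \<in> sets (conf_space E)" by (rule conf_top)
  moreover have "(\<Union>z\<in>B. Pow E - coordset E z) \<in> sets (conf_space E)"
    using fB True assms coord_sets[of _ E]
    by (intro sets.finite_UN sets.Diff conf_top) auto
  moreover have "(\<Union>z\<in>K - B. coordset E z) \<in> sets (conf_space E)"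
    using fB assms coord_sets[of _ E] by (intro sets.finite_UN) auto
  ultimately show ?thesis unfolding eq by auto
qed

lemma cylset_eq: "cylset E K BB = (\<Union>B\<in>BB. cyl E K B)"
  unfolding cylset_def cyl_def by auto

definition cylalg :: "'e set \<Rightarrow> 'e set set set" where
  "cylalg E = {cylset E K BB | K BB. finite K \<and> K \<subseteq> E \<and> BB \<subseteq> Pow K}"

lemma cylset_sets:
  assumes "finite K" "K \<subseteq> E" "BB \<subseteq> Pow K" shows "cylset E K BB \<in> sets (conf_space E)"
proof -
  have "finite BB" using assms finite_subset by (metis finite_Pow_iff)
  then show ?thesis unfolding cylset_eq using cyl_sets[OF assms(1,2)] by (intro sets.finite_UN) auto
qed

lemma cylalg_sets: "cylalg E \<subseteq> sets (conf_space E)"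
  unfolding cylalg_def using cylset_sets by blast

lemma conf_sets_sub: "sets (conf_space E) \<subseteq> sigma_sets (Pow E) (cylalg E)"
proof -
  have "(\<lambda>x. {f\<in>Pow E. x \<in> f}) ` E \<subseteq> cylalg E"
  proof
    fix C assume "C \<in> (\<lambda>x. {f\<in>Pow E. x \<in> f}) ` E"
    then obtain z where z: "z \<in> E" "C = {f\<in>Pow E. z \<in> f}" by blast
    have "C = cylset E {z} {{z}}" unfolding z cylset_def by auto
    then show "C \<in> cylalg E" unfolding cylalg_def using z by blast
  qed
  then show ?thesis unfolding conf_sets by (rule sigma_sets_mono')
qed

lemma extend_ineq:
  assumes M1: "finite_measure M1" and M2: "finite_measure M2"
    and s1: "sets M1 = sets (conf_space E)" and s2: "sets M2 = sets (conf_space E)" and k: "k \<ge> 0"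
    and cyl: "\<And>K B. finite K \<Longrightarrow> K \<subseteq> E \<Longrightarrow> B \<subseteq> K \<Longrightarrow> k * measure M2 (cyl E K B) \<le> measure M1 (cyl E K B)"
    and A: "A \<in> sets (conf_space E)"
  shows "k * measure M2 A \<le> measure M1 A"
proof -
  interpret M1: finite_measure M1 by fact
  interpret M2: finite_measure M2 by fact
  have sig: "sigma_sets (Pow E) (cylalg E) \<subseteq> sets (conf_space E)"
    using sets.sigma_sets_subset[OF cylalg_sets] conf_space_eq by metis
  show ?thesis
  proof (rule monotone_class[where R = "cylalg E" and \<Omega> = "Pow E"])
    show "cylalg E \<subseteq> Pow (Pow E)" unfolding cylalg_def cylset_def by auto
    have "Pow E = cylset E {} {{}}" unfolding cylset_def by auto
    then show "Pow E \<in> cylalg E" unfolding cylalg_def by blast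
    show "Pow E - X \<in> cylalg E" if hX: "X \<in> cylalg E" for X
    proof -
      obtain K BB where X: "X = cylset E K BB" "finite K" "K \<subseteq> E" "BB \<subseteq> Pow K"
        using hX unfolding cylalg_def by blast
      have "Pow E - X = cylset E K (Pow K - BB)" unfolding X cylset_def by auto
      then show ?thesis unfolding cylalg_def using X by blast
    qed
    show "X \<inter> Y \<in> cylalg E" if hX: "X \<in> cylalg E" and hY: "Y \<in> cylalg E" for X Y
    proof -
      obtain K BB where X: "X = cylset E K BB" "finite K" "K \<subseteq> E" "BB \<subseteq> Pow K"
        using hX unfolding cylalg_def by blast
      obtain L CC where Y: "Y = cylset E L CC" "finite L" "L \<subseteq> E" "CC \<subseteq> Pow L"
        using hY unfolding cylalg_def by blast
      have "X \<inter> Y = cylset E (K \<union> L) {B\<in>Pow (K \<union> L). B \<inter> K \<in> BB \<and> B \<inter> L \<in> CC}"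
      proof -
        have e1: "f \<inter> (K \<union> L) \<inter> K = f \<inter> K" "f \<inter> (K \<union> L) \<inter> L = f \<inter> L" for f :: "'a set" by auto
        show ?thesis unfolding X Y cylset_def by (auto simp only: e1)
      qed
      then show ?thesis unfolding cylalg_def using X Y by blast
    qed
    show "k * measure M2 X \<le> measure M1 X" if hX: "X \<in> cylalg E" for X
    proof -
      obtain K BB where X: "X = cylset E K BB" "finite K" "K \<subseteq> E" "BB \<subseteq> Pow K"
        using hX unfolding cylalg_def by blast
      have fBB: "finite BB" using X finite_subset by (metis finite_Pow_iff)
      have cs: "(\<lambda>B. cyl E K B) ` BB \<subseteq> sets (conf_space E)" using cyl_sets[OF X(2,3)] by auto
      have dj: "disjoint_family_on (\<lambda>B. cyl E K B) BB"
        unfolding disjoint_family_on_def cyl_def by auto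
      have e1: "measure M1 X = (\<Sum>B\<in>BB. measure M1 (cyl E K B))"
        unfolding X cylset_eq using fBB cs dj s1
        by (intro measure_finite_Union) (auto simp: M1.emeasure_eq_measure)
      have e2: "measure M2 X = (\<Sum>B\<in>BB. measure M2 (cyl E K B))"
        unfolding X cylset_eq using fBB cs dj s2
        by (intro measure_finite_Union) (auto simp: M2.emeasure_eq_measure)
      show ?thesis unfolding e1 e2 sum_distrib_left
        using cyl X by (intro sum_mono) auto
    qed
    show "k * measure M2 (\<Union>i. X i) \<le> measure M1 (\<Union>i. X i)"
      if "\<And>i. X i \<in> sigma_sets (Pow E) (cylalg E)" "\<And>i. k * measure M2 (X i) \<le> measure M1 (X i)" "incseq X"
      for X :: "nat \<Rightarrow> _"
    proof -
      have r: "range X \<subseteq> sets (conf_space E)" using that(1) sig by auto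
      have "(\<lambda>i. k * measure M2 (X i)) \<longlonglongrightarrow> k * measure M2 (\<Union>i. X i)"
        using M2.finite_Lim_measure_incseq[of X] r s2 that(3) by (intro tendsto_mult_left) auto
      moreover have "(\<lambda>i. measure M1 (X i)) \<longlonglongrightarrow> measure M1 (\<Union>i. X i)"
        using M1.finite_Lim_measure_incseq[of X] r s1 that(3) by auto
      ultimately show ?thesis using that(2) by (intro LIMSEQ_le) auto
    qed
    show "k * measure M2 (\<Inter>i. X i) \<le> measure M1 (\<Inter>i. X i)"
      if "\<And>i. X i \<in> sigma_sets (Pow E) (cylalg E)" "\<And>i. k * measure M2 (X i) \<le> measure M1 (X i)" "decseq X"
      for X :: "nat \<Rightarrow> _"
    proof -
      have r: "range X \<subseteq> sets (conf_space E)" using that(1) sig by auto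
      have "(\<lambda>i. k * measure M2 (X i)) \<longlonglongrightarrow> k * measure M2 (\<Inter>i. X i)"
        using M2.finite_Lim_measure_decseq[of X] r s2 that(3) by (intro tendsto_mult_left) auto
      moreover have "(\<lambda>i. measure M1 (X i)) \<longlonglongrightarrow> measure M1 (\<Inter>i. X i)"
        using M1.finite_Lim_measure_decseq[of X] r s1 that(3) by auto
      ultimately show ?thesis using that(2) by (intro LIMSEQ_le) auto
    qed
    show "A \<in> sigma_sets (Pow E) (cylalg E)" using A conf_sets_sub by blast
  qed
qed

definition updp where "updp src tgt x p = upd src tgt x (fst p) (snd p)"

lemma upd_measurable:
  assumes xE: "x \<in> E" and loop: "src x \<noteq> tgt x"
    and sN: "sets N = sets (conf_space E \<Otimes>\<^sub>M count_space E)"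
  shows "updp src tgt x \<in> measurable N (conf_space E)"
proof -
  have spN: "space N = Pow E \<times> E"
    using sets_eq_imp_space_eq[OF sN] by (simp add: space_pair_measure conf_space_eq)
  have PE: "Pow E \<in> sets (conf_space E)" by (rule conf_top)
  show ?thesis unfolding conf_space_def
  proof (rule measurable_measure_of[OF conf_gen_sub])
    show "updp src tgt x \<in> space N \<rightarrow> Pow E" unfolding spN updp_def upd_def using xE by (auto split: if_splits)
    fix C assume "C \<in> (\<lambda>x. {f\<in>Pow E. x \<in> f}) ` E"
    then obtain z where z: "z \<in> E" "C = coordset E z" unfolding coordset_def by blast
    have cx: "coordset E x \<in> sets (conf_space E)" "coordset E z \<in> sets (conf_space E)"
      using coord_sets[OF xE] coord_sets[OF z(1)] by auto
    have ce: "\<And>F. F \<subseteq> E \<Longrightarrow> F \<in> sets (count_space E)" by simp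
    show "updp src tgt x -` C \<inter> space N \<in> sets N"
    proof (cases "z = x")
      case True
      have "updp src tgt x -` C \<inter> space N = coordset E x \<times> E \<union> (Pow E - coordset E x) \<times> (E - {x})"
        unfolding spN z updp_def upd_def coordset_def True using loop xE by auto
      moreover have "\<dots> \<in> sets (conf_space E \<Otimes>\<^sub>M count_space E)"
        using cx PE xE by (intro sets.Un pair_measureI sets.Diff) auto
      ultimately show ?thesis using sN by simp
    next
      case False
      have "updp src tgt x -` C \<inter> space N =
          (coordset E x \<inter> coordset E z) \<times> E \<union> ((Pow E - coordset E x) \<inter> coordset E z) \<times> (E - {z})"
        unfolding spN z updp_def upd_def coordset_def using loop xE False by auto
      moreover have "\<dots> \<in> sets (conf_space E \<Otimes>\<^sub>M count_space E)"
        using cx PE xE z by (intro sets.Un pair_measureI sets.Diff sets.Int) auto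
      ultimately show ?thesis using sN by simp
    qed
  qed
qed


lemma upd_restrict:
  assumes "src x \<noteq> tgt x" "x \<in> K'" "K \<subseteq> K'"
  shows "upd src tgt x f y \<inter> K = upd src tgt x (f \<inter> K') y \<inter> K"
  using assms unfolding upd_def by auto

lemma countable_E:
  assumes net: "network V E src tgt c" and exh: "exhaustion V E src tgt Vn"
  shows "countable E"
proof -
  have "V = (\<Union>n. Vn n)" using exh unfolding exhaustion_def by auto
  moreover have "countable (\<Union>n. Vn n)" using exh unfolding exhaustion_def
    by (intro countable_UN) (auto intro: countable_finite)
  ultimately have cV: "countable V" by simp
  have "E \<subseteq> (\<Union>v\<in>V. {y\<in>E. src y = v \<or> tgt y = v})" using net unfolding network_def by auto
  moreover have "countable (\<Union>v\<in>V. {y\<in>E. src y = v \<or> tgt y = v})"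
    using cV net unfolding network_def by (intro countable_UN) (auto intro: countable_finite)
  ultimately show ?thesis by (rule countable_subset)
qed

lemma eventually_in:
  assumes exh: "exhaustion V E src tgt Vn" and "a \<in> V" "b \<in> V"
  shows "\<exists>N. \<forall>n\<ge>N. a \<in> Vn n \<and> b \<in> Vn n"
proof -
  have U: "(\<Union>n. Vn n) = V" and mono: "\<And>n. Vn n \<subseteq> Vn (Suc n)" using exh unfolding exhaustion_def by auto
  obtain na where na: "a \<in> Vn na" using U assms by blast
  obtain nb where nb: "b \<in> Vn nb" using U assms by blast
  have "a \<in> Vn n \<and> b \<in> Vn n" if "n \<ge> max na nb" for n
    using lift_Suc_mono_le[of Vn, OF mono, of na n] lift_Suc_mono_le[of Vn, OF mono, of nb n] that na nb by auto
  then show ?thesis by blast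
qed

lemma div_helper: "(p::real) \<le> k * q \<Longrightarrow> z \<ge> 0 \<Longrightarrow> p / z \<le> k * (q / z)"
  by (metis divide_right_mono times_divide_eq_right)

lemma ust_zero:
  assumes "{T. spanning_tree E src tgt W T \<and> P T} = {}"
  shows "ust_prob E src tgt c W P = 0"
  unfolding ust_prob_def assms by simp

lemma cyl_ineq:
  fixes V :: "'v set" and E :: "'e set" and src tgt :: "'e \<Rightarrow> 'v" and c :: "'e \<Rightarrow> real"
    and Vn :: "nat \<Rightarrow> 'v set" and \<mu> :: "'e set measure" and \<nu> :: "('e set \<times> 'e) measure"
  assumes net: "network V E src tgt c"
    and exh: "exhaustion V E src tgt Vn"
    and fusf: "is_FUSF V E src tgt c Vn \<mu>"
    and xE: "x \<in> E" and ab: "(a = src x \<and> b = tgt x) \<or> (a = tgt x \<and> b = src x)"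
    and loop: "src x \<noteq> tgt x" and joint: "is_joint_FUSF_D V E src tgt c Vn a b \<nu>"
    and K: "finite K" "K \<subseteq> E" "B \<subseteq> K"
  shows "measure \<nu> {p\<in>space \<nu>. updp src tgt x p \<inter> K = B} \<le> vcond E src tgt c a / c x * measure \<mu> (cyl E K B)"
proof -
  have sN: "sets \<nu> = sets (conf_space E \<Otimes>\<^sub>M count_space E)" and pN: "prob_space \<nu>"
    and lim: "\<And>K B y. finite K \<Longrightarrow> K \<subseteq> E \<Longrightarrow> B \<subseteq> K \<Longrightarrow> y \<in> E \<Longrightarrow>
        (\<lambda>n. ust_prob E src tgt c (Vn n) (\<lambda>t. t \<inter> K = B \<and> first_edge src tgt t a b = y))
          \<longlonglongrightarrow> measure \<nu> (cyl E K B \<times> {y})"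
    using joint unfolding is_joint_FUSF_D_def by auto
  interpret N: prob_space \<nu> by fact
  have spN: "space \<nu> = Pow E \<times> E"
    using sets_eq_imp_space_eq[OF sN] by (simp add: space_pair_measure conf_space_eq)
  have cpos: "\<And>y. y \<in> E \<Longrightarrow> c y > 0" using net unfolding network_def by auto
  have anb: "a \<noteq> b" using ab loop by auto
  have aV: "a \<in> V" "b \<in> V" using net xE ab unfolding network_def by auto
  obtain N0 where N0: "\<And>n. n \<ge> N0 \<Longrightarrow> a \<in> Vn n \<and> b \<in> Vn n"
    using eventually_in[OF exh aV] by blast
  have Vfin: "\<And>n. finite (Vn n) \<and> Vn n \<subseteq> V" using exh unfolding exhaustion_def by auto
  define fe where "fe t = first_edge src tgt t a b" for t
  define Ea where "Ea = {y\<in>E. src y = a \<or> tgt y = a}"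
  define K' where "K' = insert x K"
  have K': "finite K'" "K' \<subseteq> E" "x \<in> K'" "K \<subseteq> K'" using K xE unfolding K'_def by auto
  have finEa: "finite Ea" using net aV unfolding network_def Ea_def by auto
  have EaE: "Ea \<subseteq> E" unfolding Ea_def by auto
  have fe_in: "fe T \<in> Ea" if "n \<ge> N0" "spanning_tree E src tgt (Vn n) T" for n T
  proof -
    have "fe T \<in> T" "src (fe T) = a \<or> tgt (fe T) = a"
      using first_edge_at[OF that(2) _ _ anb] N0[OF that(1)] unfolding fe_def by auto
    then show ?thesis using tree_E[OF that(2)] unfolding Ea_def by auto
  qed
  define Cells where "Cells = Sigma Ea (\<lambda>y. {B'. B' \<subseteq> K' \<and> upd src tgt x B' y \<inter> K = B})"
  have finC: "finite Cells" unfolding Cells_def using finEa K'(1)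
    by (intro finite_SigmaI) (auto intro: finite_subset[of _ "Pow K'"])
  define cell where "cell cl = (\<lambda>t. t \<inter> K' = snd cl \<and> fe t = fst cl)" for cl
  define tgtP where "tgtP = (\<lambda>t. upd src tgt x t (fe t) \<inter> K = B)"
  have L1: "(\<lambda>n. \<Sum>cl\<in>Cells. ust_prob E src tgt c (Vn n) (cell cl))
      \<longlonglongrightarrow> (\<Sum>cl\<in>Cells. measure \<nu> (cyl E K' (snd cl) \<times> {fst cl}))"
  proof (rule tendsto_sum)
    fix cl assume "cl \<in> Cells"
    then have "fst cl \<in> E" "snd cl \<subseteq> K'" unfolding Cells_def using EaE by auto
    then show "(\<lambda>n. ust_prob E src tgt c (Vn n) (cell cl)) \<longlonglongrightarrow> measure \<nu> (cyl E K' (snd cl) \<times> {fst cl})"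
      using lim[OF K'(1,2)] unfolding cell_def fe_def by blast
  qed
  have L2: "(\<Sum>cl\<in>Cells. ust_prob E src tgt c (Vn n) (cell cl)) \<le> ust_prob E src tgt c (Vn n) tgtP" for n
  proof -
    define W where "W = Vn n"
    have W: "finite W" "W \<subseteq> V" using Vfin unfolding W_def by auto
    define w where "w T = (\<Prod>y\<in>T. c y)" for T
    define S where "S cl = {T. spanning_tree E src tgt W T \<and> cell cl T}" for cl
    define Z where "Z = (\<Sum>T\<in>{T. spanning_tree E src tgt W T}. w T)"
    have wnn: "w T \<ge> 0" if "spanning_tree E src tgt W T" for T
    proof -
      have "T \<subseteq> E" using tree_E[OF that] .
      then show ?thesis unfolding w_def using cpos by (intro prod_nonneg) (auto intro: less_imp_le)
    qed
    have Zn: "Z \<ge> 0" unfolding Z_def using wnn by (intro sum_nonneg) auto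
    have finS: "finite (S cl)" for cl unfolding S_def using finite_ST[OF net W] .
    have dis: "\<forall>i\<in>Cells. \<forall>j\<in>Cells. i \<noteq> j \<longrightarrow> S i \<inter> S j = {}"
      unfolding S_def cell_def by (auto simp: prod_eq_iff)
    have sub: "(\<Union>cl\<in>Cells. S cl) \<subseteq> {T. spanning_tree E src tgt W T \<and> tgtP T}"
    proof
      fix T assume "T \<in> (\<Union>cl\<in>Cells. S cl)"
      then obtain y B' where cl: "(y, B') \<in> Cells" "T \<in> S (y, B')" by auto
      have "upd src tgt x T (fe T) \<inter> K = upd src tgt x (T \<inter> K') y \<inter> K"
        using upd_restrict[where src=src and tgt=tgt and x=x and K'=K' and K=K, OF loop K'(3) K'(4)] cl unfolding S_def cell_def by auto
      also have "\<dots> = B" using cl unfolding S_def cell_def Cells_def by auto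
      finally show "T \<in> {T. spanning_tree E src tgt W T \<and> tgtP T}"
        using cl unfolding S_def tgtP_def by auto
    qed
    have "(\<Sum>cl\<in>Cells. ust_prob E src tgt c W (cell cl)) = (\<Sum>cl\<in>Cells. sum w (S cl)) / Z"
      unfolding ust_prob_def S_def Z_def w_def by (simp add: sum_divide_distrib)
    also have "(\<Sum>cl\<in>Cells. sum w (S cl)) = sum w (\<Union>cl\<in>Cells. S cl)"
      using sum.UNION_disjoint[OF finC _ dis, of w] finS by simp
    also have "\<dots> \<le> sum w {T. spanning_tree E src tgt W T \<and> tgtP T}"
      using sub finite_ST[OF net W] wnn by (intro sum_mono2) auto
    finally have "(\<Sum>cl\<in>Cells. ust_prob E src tgt c W (cell cl)) \<le> sum w {T. spanning_tree E src tgt W T \<and> tgtP T} / Z"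
      using Zn by (simp add: divide_right_mono)
    then show ?thesis unfolding W_def ust_prob_def Z_def w_def by simp
  qed
  have L3: "ust_prob E src tgt c (Vn n) tgtP \<le> vcond E src tgt c a / c x * ust_prob E src tgt c (Vn n) (\<lambda>t. t \<inter> K = B)"
    if "n \<ge> N0" for n
  proof -
    have W: "finite (Vn n)" "Vn n \<subseteq> V" using Vfin by auto
    have "(\<Sum>T\<in>{T. spanning_tree E src tgt (Vn n) T \<and> tgtP T}. \<Prod>y\<in>T. c y)
       \<le> vcond E src tgt c a / c x * (\<Sum>T\<in>{T. spanning_tree E src tgt (Vn n) T \<and> T \<inter> K = B}. \<Prod>y\<in>T. c y)"
      using finite_sum_ineq[OF net W xE ab loop, of "\<lambda>s. s \<inter> K = B"] N0[OF that]
      unfolding tgtP_def fe_def by blast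
    moreover have "(\<Sum>T\<in>{T. spanning_tree E src tgt (Vn n) T}. \<Prod>y\<in>T. c y) \<ge> 0"
      using tree_E[where E=E and src=src and tgt=tgt and W="Vn n"] cpos by (intro sum_nonneg prod_nonneg) (force intro: less_imp_le)
    ultimately show ?thesis unfolding ust_prob_def by (rule div_helper)
  qed
  have L4: "(\<lambda>n. ust_prob E src tgt c (Vn n) (\<lambda>t. t \<inter> K = B)) \<longlonglongrightarrow> measure \<mu> (cyl E K B)"
    using fusf K unfolding is_FUSF_def by auto
  have sumle: "(\<Sum>cl\<in>Cells. measure \<nu> (cyl E K' (snd cl) \<times> {fst cl})) \<le> vcond E src tgt c a / c x * measure \<mu> (cyl E K B)"
  proof (rule LIMSEQ_le[OF L1 tendsto_mult_left[OF L4]])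
    show "\<exists>N. \<forall>n\<ge>N. (\<Sum>cl\<in>Cells. ust_prob E src tgt c (Vn n) (cell cl)) \<le> vcond E src tgt c a / c x * ust_prob E src tgt c (Vn n) (\<lambda>t. t \<inter> K = B)"
      using L2 L3 order_trans by blast
  qed
  define U1 where "U1 = (\<Union>cl\<in>Cells. cyl E K' (snd cl) \<times> {fst cl})"
  define U2 where "U2 = Pow E \<times> (E - Ea)"
  have cellsets: "cyl E K' (snd cl) \<times> {fst cl} \<in> sets \<nu>" if "cl \<in> Cells" for cl
  proof -
    have "fst cl \<in> E" using that EaE unfolding Cells_def by auto
    then show ?thesis unfolding sN using cyl_sets[OF K'(1,2)] by (intro pair_measureI) auto
  qed
  have U1s: "U1 \<in> sets \<nu>" unfolding U1_def using finC cellsets by (intro sets.finite_UN) auto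
  have U2null: "U2 \<in> null_sets \<nu>"
  proof -
    have "U2 = (\<Union>y\<in>E - Ea. Pow E \<times> {y})" unfolding U2_def by auto
    moreover have "(\<Union>y\<in>E - Ea. Pow E \<times> {y}) \<in> null_sets \<nu>"
    proof (rule null_sets_UN')
      show "countable (E - Ea)" using countable_E[OF net exh] by (rule countable_subset[rotated]) auto
      fix y assume y: "y \<in> E - Ea"
      have ms: "Pow E \<times> {y} \<in> sets \<nu>" unfolding sN using y conf_top by (intro pair_measureI) auto
      have "cyl E {} {} = Pow E" unfolding cyl_def by auto
      then have l: "(\<lambda>n. ust_prob E src tgt c (Vn n) (\<lambda>t. t \<inter> {} = {} \<and> first_edge src tgt t a b = y))
          \<longlonglongrightarrow> measure \<nu> (Pow E \<times> {y})" using lim[of "{}" "{}" y] y by auto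
      have "eventually (\<lambda>n. ust_prob E src tgt c (Vn n) (\<lambda>t. t \<inter> {} = {} \<and> first_edge src tgt t a b = y) = 0) sequentially"
        unfolding eventually_sequentially
      proof (intro exI allI impI)
        fix n assume "n \<ge> N0"
        then show "ust_prob E src tgt c (Vn n) (\<lambda>t. t \<inter> {} = {} \<and> first_edge src tgt t a b = y) = 0"
          using fe_in[of n] y unfolding fe_def by (intro ust_zero) auto
      qed
      then have "(\<lambda>n. ust_prob E src tgt c (Vn n) (\<lambda>t. t \<inter> {} = {} \<and> first_edge src tgt t a b = y)) \<longlonglongrightarrow> 0"
        by (rule tendsto_eventually)
      then have "measure \<nu> (Pow E \<times> {y}) = 0" using l LIMSEQ_unique by blast
      then show "Pow E \<times> {y} \<in> null_sets \<nu>" using ms by (simp add: null_sets_def N.emeasure_eq_measure)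
    qed
    ultimately show ?thesis by simp
  qed
  have U2s: "U2 \<in> sets \<nu>" using U2null by auto
  have U20: "measure \<nu> U2 = 0" using U2null by (simp add: measure_eq_0_null_sets)
  have incl: "{p\<in>space \<nu>. updp src tgt x p \<inter> K = B} \<subseteq> U1 \<union> U2"
  proof
    fix p assume p: "p \<in> {p\<in>space \<nu>. updp src tgt x p \<inter> K = B}"
    obtain f y where pfy: "p = (f, y)" by (cases p)
    have fy: "f \<subseteq> E" "y \<in> E" "upd src tgt x f y \<inter> K = B" using p spN unfolding pfy updp_def by auto
    show "p \<in> U1 \<union> U2"
    proof (cases "y \<in> Ea")
      case True
      have "upd src tgt x (f \<inter> K') y \<inter> K = B" using fy upd_restrict[where src=src and tgt=tgt and x=x and K'=K' and K=K, OF loop K'(3) K'(4)] by simp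
      then have "(y, f \<inter> K') \<in> Cells" unfolding Cells_def using True by auto
      moreover have "p \<in> cyl E K' (f \<inter> K') \<times> {y}" unfolding pfy cyl_def using fy by auto
      ultimately show ?thesis unfolding U1_def by force
    next
      case False then show ?thesis unfolding U2_def pfy using fy by auto
    qed
  qed
  have "measure \<nu> {p\<in>space \<nu>. updp src tgt x p \<inter> K = B} \<le> measure \<nu> (U1 \<union> U2)"
    using incl U1s U2s by (intro N.finite_measure_mono) auto
  also have "\<dots> \<le> measure \<nu> U1 + measure \<nu> U2" using U1s U2s by (rule measure_Un_le)
  also have "measure \<nu> U1 \<le> (\<Sum>cl\<in>Cells. measure \<nu> (cyl E K' (snd cl) \<times> {fst cl}))"
    unfolding U1_def using finC cellsets by (intro N.finite_measure_subadditive_finite) auto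
  finally show ?thesis using sumle U20 by linarith
qed


lemma vcond_ge:
  assumes net: "network V E src tgt c" and xE: "x \<in> E" and a: "a = src x \<or> a = tgt x"
  shows "c x \<le> vcond E src tgt c a"
proof -
  have aV: "a \<in> V" using net xE a unfolding network_def by auto
  have fin: "finite {y\<in>E. src y = a \<or> tgt y = a}" using net aV unfolding network_def by auto
  have cpos: "\<And>y. y \<in> E \<Longrightarrow> c y > 0" using net unfolding network_def by auto
  show ?thesis unfolding vcond_def
    using fin xE a cpos by (intro member_le_sum) (auto intro: less_imp_le)
qed

theorem corollary2p4:
  fixes V :: "'v set" and E :: "'e set" and src tgt :: "'e \<Rightarrow> 'v" and c :: "'e \<Rightarrow> real"
    and Vn :: "nat \<Rightarrow> 'v set" and \<mu> :: "'e set measure" and \<nu> :: "('e set \<times> 'e) measure"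
    and x :: "'e" and a b :: 'v and A :: "'e set set"
  assumes "network V E src tgt c"
    and "exhaustion V E src tgt Vn"
    and "is_FUSF V E src tgt c Vn \<mu>"
    and "x \<in> E" and "(a = src x \<and> b = tgt x) \<or> (a = tgt x \<and> b = src x)"
    and "src x \<noteq> tgt x \<Longrightarrow> is_joint_FUSF_D V E src tgt c Vn a b \<nu>"
    and "A \<in> sets (conf_space E)"
  shows "measure \<mu> A \<ge> c x / vcond E src tgt c a *
           (if src x = tgt x then measure \<mu> A
            else measure \<nu> {p\<in>space \<nu>. upd src tgt x (fst p) (snd p) \<in> A})"
proof -
  note net = assms(1) and exh = assms(2) and fusf = assms(3) and xE = assms(4) and ab = assms(5)
    and A = assms(7)
  have cpos: "c x > 0" using net xE unfolding network_def by auto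
  have vge: "c x \<le> vcond E src tgt c a" using vcond_ge[OF net xE] ab by auto
  have k0: "0 \<le> c x / vcond E src tgt c a" using cpos vge by simp
  have k1: "c x / vcond E src tgt c a \<le> 1" using cpos vge by simp
  have sM: "sets \<mu> = sets (conf_space E)" and pM: "prob_space \<mu>" using fusf unfolding is_FUSF_def by auto
  interpret M: prob_space \<mu> by fact
  show ?thesis
  proof (cases "src x = tgt x")
    case True
    have "c x / vcond E src tgt c a * measure \<mu> A \<le> measure \<mu> A"
      using k0 k1 by (intro mult_left_le_one_le) auto
    then show ?thesis using True by simp
  next
    case False
    have joint: "is_joint_FUSF_D V E src tgt c Vn a b \<nu>" using assms(6) False by blast
    have sN: "sets \<nu> = sets (conf_space E \<Otimes>\<^sub>M count_space E)" and pN: "prob_space \<nu>"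
      using joint unfolding is_joint_FUSF_D_def by auto
    interpret N: prob_space \<nu> by fact
    have spN: "space \<nu> = Pow E \<times> E"
      using sets_eq_imp_space_eq[OF sN] by (simp add: space_pair_measure conf_space_eq)
    define g where "g = updp src tgt x"
    have gm: "g \<in> measurable \<nu> (conf_space E)" unfolding g_def using upd_measurable[where src=src and tgt=tgt, OF xE False sN] .
    define \<nu>' where "\<nu>' = distr \<nu> (conf_space E) g"
    have pN': "prob_space \<nu>'" unfolding \<nu>'_def using gm by (rule N.prob_space_distr)
    have sN': "sets \<nu>' = sets (conf_space E)" unfolding \<nu>'_def by simp
    have mN': "measure \<nu>' X = measure \<nu> {p\<in>space \<nu>. g p \<in> X}" if "X \<in> sets (conf_space E)" for X
    proof -
      have "measure \<nu>' X = measure \<nu> (g -` X \<inter> space \<nu>)" unfolding \<nu>'_def using gm that by (rule measure_distr)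
      moreover have "g -` X \<inter> space \<nu> = {p\<in>space \<nu>. g p \<in> X}" by auto
      ultimately show ?thesis by simp
    qed
    have gE: "g p \<subseteq> E" if "p \<in> space \<nu>" for p
      using that spN xE unfolding g_def updp_def upd_def by (auto split: if_splits)
    have "c x / vcond E src tgt c a * measure \<nu>' A \<le> measure \<mu> A"
    proof (rule extend_ineq[OF _ _ sM sN' k0 _ A])
      show "finite_measure \<mu>" using pM unfolding prob_space_def by blast
      show "finite_measure \<nu>'" using pN' unfolding prob_space_def by blast
      fix K B assume K: "finite K" "K \<subseteq> E" "B \<subseteq> K"
      have "measure \<nu>' (cyl E K B) = measure \<nu> {p\<in>space \<nu>. g p \<in> cyl E K B}"
        using mN' cyl_sets[OF K(1,2)] by blast
      also have "{p\<in>space \<nu>. g p \<in> cyl E K B} = {p\<in>space \<nu>. updp src tgt x p \<inter> K = B}"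
        using gE unfolding cyl_def g_def by auto
      finally have "measure \<nu>' (cyl E K B) \<le> vcond E src tgt c a / c x * measure \<mu> (cyl E K B)"
        using cyl_ineq[OF net exh fusf xE ab False joint K] by simp
      then have "c x / vcond E src tgt c a * measure \<nu>' (cyl E K B)
          \<le> c x / vcond E src tgt c a * (vcond E src tgt c a / c x * measure \<mu> (cyl E K B))"
        using k0 by (intro mult_left_mono)
      also have "\<dots> = measure \<mu> (cyl E K B)" using cpos vge by (simp add: field_simps)
      finally show "c x / vcond E src tgt c a * measure \<nu>' (cyl E K B) \<le> measure \<mu> (cyl E K B)" .
    qed
    moreover have "measure \<nu>' A = measure \<nu> {p\<in>space \<nu>. upd src tgt x (fst p) (snd p) \<in> A}"
      using mN'[OF A] unfolding g_def updp_def .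
    ultimately show ?thesis using False by simp
  qed
qed


end
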